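(* For $\xi>0$ and $w,z\in(-1,1)$ let \[ \Phi_{\mathbf 0}(\xi,w,z)=\frac{6}{\pi^2}\begin{cases}\Upsilon\Bigl(1+\frac{\xi^{-1}-\max(|w|,|z|)-1}{|w+z|}\Bigr) & \text{if } w+z\neq 0,\\ 0 & \text{if } w+z=0,\ \xi^{-1}<1+|w|,\\ 1 & \text{if } w+z=0,\ \xi^{-1}\ge 1+|w|,\end{cases} \] with $\Upsilon(x)=0$ for $x\le0$, $\Upsilon(x)=x$ for $0<x<1$, $\Upsilon(x)=1$ for $x\ge1$, and let $\Phi(\xi,w)=\int_\xi^\infty\int_{-1}^1\Phi_{\mathbf 0}(\eta,w,z)\,dz\,d\eta$. Then for $w\in(-1,1)$, \[ \Phi(\xi,w)=\begin{cases}1-\frac{12}{\pi^2}\xi & (\xi\le\frac12),\\[3pt] 1+\frac{6}{\pi^2}\bigl[F(\xi,w)-F(\tfrac12,w)-1\bigr] & (\frac12\le\xi\le\frac1{1+|w|}),\\[3pt] \frac{6}{\pi^2}\bigl[G(\xi,w)-G(\tfrac1{1-|w|},w)\bigr] & (\frac1{1+|w|}\le\xi\le\frac1{1-|w|}),\\[3pt] 0 & (\xi\ge\frac1{1-|w|}),\end{cases} \] where \[ F(\xi,w)=\Psi(\xi(1+|w|))+\Psi(\xi(1-|w|))-2\log\xi+2\Bigl(1+|w|\log\frac{1-|w|}{1+|w|}\Bigr)\xi, \] \[ G(\xi,w)=\Psi(\xi(1+|w|))-\log\xi+\Bigl(1-|w|+2|w|\log\frac{2|w|}{1+|w|}\Bigr)\xi,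 \] and, for $a>0$, \[ \Psi(a)=\begin{cases}-\operatorname{Li}_2(a)+(1-a)\log(a^{-1}-1)+\log a-\tfrac12(\log a)^2+\tfrac{\pi^2}{6} & (a<1),\\ \operatorname{Li}_2(a^{-1})-(a-1)\log(1-a^{-1})+\log a-\tfrac{\pi^2}{6} & (a>1),\end{cases} \] with $\operatorname{Li}_2(z)=\sum_{k\ge1}z^k/k^2$ for $|z|\le1$.
   Context: $\Psi$ is the solution on $a>0$ of $\Psi'(a)=(a^{-1}-1)\log|a^{-1}-1|$ with $\Psi(1)=0$. The function $\Phi(\xi,w)$ is the function such that the collision kernel from a generic initial point in the Boltzmann–Grad limit of the two-dimensional periodic Lorentz gas equals $\sigma\,\Phi(\xi,b)$, with $\sigma$ the scattering cross section and $b$ the impact parameter; the claim itself only concerns the explicitly defined functions above. *)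

theory Defs
  imports "HOL-Analysis.Analysis"
begin

definition Upsilon :: "real \<Rightarrow> real" where
  "Upsilon x = (if x \<le> 0 then 0 else if x < 1 then x else 1)"

definition Phi0 :: "real \<Rightarrow> real \<Rightarrow> real \<Rightarrow> real" where
  "Phi0 \<xi> w z = 6 / pi\<^sup>2 *
     (if w + z \<noteq> 0 then Upsilon (1 + (inverse \<xi> - max \<bar>w\<bar> \<bar>z\<bar> - 1) / \<bar>w + z\<bar>)
      else if inverse \<xi> < 1 + \<bar>w\<bar> then 0 else 1)"

definition Phi :: "real \<Rightarrow> real \<Rightarrow> real" where
  "Phi \<xi> w = (LBINT \<eta>:{\<xi>..}. (LBINT z:{-1..1}. Phi0 \<eta> w z))"

definition Li2 :: "real \<Rightarrow> real" where
  "Li2 z = (\<Sum>k. z ^ (Suc k) / (real (Suc k))\<^sup>2)"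

text \<open>Psi on a > 0; the value at a = 1 is Psi(1) = 0 (normalisation, continuous extension).\<close>
definition Psi :: "real \<Rightarrow> real" where
  "Psi a = (if a < 1 then - Li2 a + (1 - a) * ln (inverse a - 1) + ln a - (ln a)\<^sup>2 / 2 + pi\<^sup>2 / 6
            else if a > 1 then Li2 (inverse a) - (a - 1) * ln (1 - inverse a) + ln a - pi\<^sup>2 / 6
            else 0)"

definition F :: "real \<Rightarrow> real \<Rightarrow> real" where
  "F \<xi> w = Psi (\<xi> * (1 + \<bar>w\<bar>)) + Psi (\<xi> * (1 - \<bar>w\<bar>)) - 2 * ln \<xi>
     + 2 * (1 + \<bar>w\<bar> * ln ((1 - \<bar>w\<bar>) / (1 + \<bar>w\<bar>))) * \<xi>"

definition G :: "real \<Rightarrow> real \<Rightarrow> real" where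
  "G \<xi> w = Psi (\<xi> * (1 + \<bar>w\<bar>)) - ln \<xi>
     + (1 - \<bar>w\<bar> + 2 * \<bar>w\<bar> * ln (2 * \<bar>w\<bar> / (1 + \<bar>w\<bar>))) * \<xi>"

end

theory Submission
  imports Defs "HOL-Real_Asymp.Real_Asymp"
begin

lemma Li2_summable: "\<bar>x\<bar> \<le> 1 \<Longrightarrow> summable (\<lambda>k. x ^ (Suc k) / (real (Suc k))\<^sup>2)"
proof -
  assume x: "\<bar>x\<bar> \<le> 1"
  have s: "summable (\<lambda>k. 1 / (real (Suc k))\<^sup>2)"
    using inverse_squares_sums by (simp add: sums_iff)
  show ?thesis
  proof (rule summable_comparison_test'[OF s])
    fix n show "norm (x ^ Suc n / (real (Suc n))\<^sup>2) \<le> 1 / (real (Suc n))\<^sup>2"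
    proof -
      have "\<bar>x\<bar> ^ Suc n \<le> 1" by (rule power_le_one) (use x in auto)
      then show ?thesis by (simp add: abs_mult power_abs divide_right_mono del: of_nat_Suc power_Suc)
    qed
  qed
qed

lemma Li2_one: "Li2 1 = pi\<^sup>2 / 6"
  using inverse_squares_sums unfolding Li2_def by (simp add: sums_iff add.commute)

lemma Li2_zero: "Li2 0 = 0"
  unfolding Li2_def by simp

lemma Li2_cont: "continuous_on {-1..1} Li2"
proof -
  have "continuous_on {-1..1} (\<lambda>x. \<Sum>k. x ^ (Suc k) / (real (Suc k))\<^sup>2)"
  proof (rule uniform_limit_theorem; (intro always_eventually allI)?)
    show "uniform_limit {-1..1} (\<lambda>n x. \<Sum>k<n. x ^ (Suc k) / (real (Suc k))\<^sup>2)
           (\<lambda>x. \<Sum>k. x ^ (Suc k) / (real (Suc k))\<^sup>2) sequentially"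
    proof (rule Weierstrass_m_test)
      fix n :: nat and x :: real assume x: "x \<in> {-1..1}"
      then have "\<bar>x\<bar> \<le> 1" by auto
      then show "norm (x ^ Suc n / (real (Suc n))\<^sup>2) \<le> 1 / (real (Suc n))\<^sup>2"
      proof -
      have "\<bar>x\<bar> ^ Suc n \<le> 1" by (rule power_le_one) (use x in auto)
      then show ?thesis by (simp add: abs_mult power_abs divide_right_mono del: of_nat_Suc power_Suc)
    qed
    next
      show "summable (\<lambda>k. 1 / (real (Suc k))\<^sup>2)"
        using inverse_squares_sums by (simp add: sums_iff)
    qed
  qed (auto intro!: continuous_intros)
  then show ?thesis unfolding Li2_def[abs_def] .
qed

lemma ln_one_minus_sums: "\<bar>y\<bar> < 1 \<Longrightarrow> (\<lambda>n. y ^ (Suc n) / real (Suc n)) sums (- ln (1 - y))"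
proof -
  assume y: "\<bar>y\<bar> < 1"
  have "(\<lambda>n. - ((-(-y))^n) / of_nat n) sums ln (1 + (-y))"
    by (rule ln_series') (use y in simp)
  then have "(\<lambda>n. - (y^n) / real n) sums ln (1 - y)" by simp
  then have "(\<lambda>n. - (y^(Suc n)) / real (Suc n)) sums ln (1 - y)"
    by (subst sums_Suc_iff) simp
  from sums_minus[OF this] show ?thesis by simp
qed

lemma Li2_deriv: assumes "0 < y" "y < 1"
  shows "(Li2 has_real_derivative (- ln (1 - y) / y)) (at y)"
proof -
  let ?f = "\<lambda>n::nat. 1 / (real (Suc n))\<^sup>2"
  have eq: "Li2 = (\<lambda>x. \<Sum>n. ?f n * x ^ Suc n)"
    unfolding Li2_def by (intro ext) simp
  have conv: "summable (\<lambda>n. ?f n * real (Suc n) * x ^ n)" if "x \<in> {-1<..<1}" for x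
  proof -
    have g: "summable (\<lambda>n. \<bar>x\<bar> ^ n)" using that by (intro summable_geometric) auto
    have "summable (\<lambda>n. x ^ n / real (Suc n))"
    proof (rule summable_comparison_test'[OF g])
      fix n show "norm (x ^ n / real (Suc n)) \<le> \<bar>x\<bar> ^ n"
        by (simp add: power_abs divide_le_eq del: of_nat_Suc) (simp add: mult_le_cancel_left1)
    qed
    moreover have "(\<lambda>n. ?f n * real (Suc n) * x ^ n) = (\<lambda>n. x ^ n / real (Suc n))"
      by (intro ext) (simp add: power2_eq_square field_simps del: of_nat_Suc)
    ultimately show ?thesis by simp
  qed
  have d: "DERIV (\<lambda>x. \<Sum>n. ?f n * x ^ Suc n) y :> (\<Sum>n. ?f n * real (Suc n) * y ^ n)"
    by (rule DERIV_power_series'[where R=1]) (use conv assms in auto)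
  have "(\<lambda>n. ?f n * real (Suc n) * y ^ n) = (\<lambda>n. (y ^ (Suc n) / real (Suc n)) / y)"
    using assms by (intro ext) (simp add: power2_eq_square field_simps del: of_nat_Suc)
  moreover have "(\<lambda>n. (y ^ (Suc n) / real (Suc n)) / y) sums (- ln (1 - y) / y)"
    by (rule sums_divide, rule ln_one_minus_sums) (use assms in auto)
  ultimately have "(\<Sum>n. ?f n * real (Suc n) * y ^ n) = - ln (1 - y) / y"
    by (simp add: sums_iff)
  with d eq show ?thesis by simp
qed

lemma Li2_deriv_chain[derivative_intros]:
  assumes "(g has_real_derivative g') (at x)" "0 < g x" "g x < 1"
  shows "((\<lambda>x. Li2 (g x)) has_real_derivative (- ln (1 - g x) / g x * g')) (at x)"
  using DERIV_chain2[OF Li2_deriv[OF assms(2,3)] assms(1)] .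

definition PsiL :: "real \<Rightarrow> real" where
  "PsiL a = - Li2 a + (1 - a) * ln (inverse a - 1) + ln a - (ln a)\<^sup>2 / 2 + pi\<^sup>2 / 6"
definition PsiR :: "real \<Rightarrow> real" where
  "PsiR a = Li2 (inverse a) - (a - 1) * ln (1 - inverse a) + ln a - pi\<^sup>2 / 6"

lemma PsiL_deriv: assumes "0 < x" "x < 1"
  shows "(PsiL has_real_derivative ((1/x - 1) * ln \<bar>1/x - 1\<bar>)) (at x)"
proof -
  have i: "inverse x - 1 = (1-x)/x" "1/x - 1 = (1-x)/x" using assms by (auto simp: field_simps)
  have l: "ln ((1-x)/x) = ln (1-x) - ln x" using assms by (simp add: ln_div)
  have p: "(1-x)/x > 0" using assms by simp
  show ?thesis unfolding PsiL_def[abs_def]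
    using assms p
    apply (auto intro!: derivative_eq_intros simp: i l)
    apply (simp add: inverse_eq_divide)
    apply (simp add: field_simps)
    done
qed

lemma PsiR_deriv: assumes "1 < x"
  shows "(PsiR has_real_derivative ((1/x - 1) * ln \<bar>1/x - 1\<bar>)) (at x)"
proof -
  have i: "1 - inverse x = (x-1)/x" "\<bar>1/x - 1\<bar> = (x-1)/x" using assms by (auto simp: field_simps)
  have l: "ln ((x-1)/x) = ln (x-1) - ln x" using assms by (simp add: ln_div)
  have p: "(x-1)/x > 0" "0 < inverse x" "inverse x < 1" using assms by (auto simp: inverse_less_1_iff)
  show ?thesis unfolding PsiR_def[abs_def]
    using assms p
    apply (auto intro!: derivative_eq_intros simp: i l)
    apply (simp add: inverse_eq_divide)
    apply (simp add: field_simps)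
    done
qed

lemma Psi_deriv: assumes "0 < x" "x \<noteq> 1"
  shows "(Psi has_real_derivative ((1/x - 1) * ln \<bar>1/x - 1\<bar>)) (at x)"
proof (cases "x < 1")
  case True
  show ?thesis
    by (rule has_field_derivative_transform_within_open[OF PsiL_deriv[OF assms(1) True], of "{0<..<1}"])
       (use assms True in \<open>auto simp: Psi_def PsiL_def\<close>)
next
  case False
  then have "1 < x" using assms by simp
  then show ?thesis
    by (intro has_field_derivative_transform_within_open[OF PsiR_deriv, of x "{1<..}"])
       (auto simp: Psi_def PsiR_def)
qed

lemma Li2_left1: "(Li2 \<longlongrightarrow> pi\<^sup>2/6) (at_left 1)"
  using continuous_on_Icc_at_leftD[OF Li2_cont] by (simp add: Li2_one)

lemma Psi_left1: "(Psi \<longlongrightarrow> 0) (at_left 1)"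
proof -
  have e: "eventually (\<lambda>x. PsiL x = Psi x) (at_left (1::real))"
    unfolding eventually_at_left_field by (rule exI[of _ 0]) (auto simp: Psi_def PsiL_def)
  have a: "((\<lambda>x::real. (1 - x) * ln (inverse x - 1)) \<longlongrightarrow> 0) (at_left 1)" by real_asymp
  have b: "((\<lambda>x::real. ln x) \<longlongrightarrow> 0) (at_left 1)" by real_asymp
  have b2: "((\<lambda>x::real. (ln x)\<^sup>2 / 2) \<longlongrightarrow> 0) (at_left 1)" by real_asymp
  have "(PsiL \<longlongrightarrow> - (pi\<^sup>2/6) + 0 + 0 - 0 + pi\<^sup>2/6) (at_left 1)"
    unfolding PsiL_def[abs_def] by (intro tendsto_intros Li2_left1 a b b2)
  then have "(PsiL \<longlongrightarrow> 0) (at_left 1)" by simp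
  then show ?thesis using e by (rule Lim_transform_eventually)
qed

lemma Psi_right1: "(Psi \<longlongrightarrow> 0) (at_right 1)"
proof -
  have e: "eventually (\<lambda>x. PsiR x = Psi x) (at_right (1::real))"
    unfolding eventually_at_right_field by (rule exI[of _ 2]) (auto simp: Psi_def PsiR_def)
  have inv: "filterlim (\<lambda>x::real. inverse x) (at_left 1) (at_right 1)" by real_asymp
  have l: "((\<lambda>x. Li2 (inverse x)) \<longlongrightarrow> pi\<^sup>2/6) (at_right 1)"
    by (rule filterlim_compose[OF Li2_left1 inv])
  have a: "((\<lambda>x::real. (x - 1) * ln (1 - inverse x)) \<longlongrightarrow> 0) (at_right 1)" by real_asymp
  have b: "((\<lambda>x::real. ln x) \<longlongrightarrow> 0) (at_right 1)" by real_asymp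
  have "(PsiR \<longlongrightarrow> pi\<^sup>2/6 - 0 + 0 - pi\<^sup>2/6) (at_right 1)"
    unfolding PsiR_def[abs_def] by (intro tendsto_intros l a b)
  then have "(PsiR \<longlongrightarrow> 0) (at_right 1)" by simp
  then show ?thesis using e by (rule Lim_transform_eventually)
qed

lemma Psi_isCont: "0 < x \<Longrightarrow> isCont Psi x"
proof (cases "x = 1")
  case True
  have "Psi 1 = 0" by (simp add: Psi_def)
  then show ?thesis using True Psi_left1 Psi_right1
    by (simp add: isCont_def filterlim_at_split)
next
  case False
  assume "0 < x"
  then show ?thesis using Psi_deriv[OF _ False] DERIV_isCont by blast
qed

lemma Psi_cont_on: "continuous_on {0<..} Psi"
  by (intro continuous_at_imp_continuous_on ballI Psi_isCont) auto

lemma Li2_reflection: assumes "0 < p" "p < 1"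
  shows "Li2 p + Li2 (1 - p) = pi\<^sup>2/6 - ln p * ln (1 - p)"
proof -
  define g where "g x = Li2 x + Li2 (1 - x) + ln x * ln (1 - x)" for x
  have d: "DERIV g x :> 0" if "p < x" "x < 1" for x
  proof -
    have x: "0 < x" "x < 1" "0 < 1 - x" "1 - x < 1" using that assms by auto
    show ?thesis unfolding g_def[abs_def] using x
      by (auto intro!: derivative_eq_intros)
  qed
  have c: "continuous_on {p..1} g"
  proof (rule continuous_on_IccI)
    have cl: "continuous_on {p..1} Li2" by (rule continuous_on_subset[OF Li2_cont]) (use assms in auto)
    have cl2: "continuous_on {p..1} (\<lambda>x. Li2 (1 - x))"
      by (rule continuous_on_compose2[OF Li2_cont]) (use assms in \<open>auto intro!: continuous_intros\<close>)
    have l3: "((\<lambda>x. ln x * ln (1 - x)) \<longlongrightarrow> 0) (at_left (1::real))" by real_asymp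
    have "(g \<longlongrightarrow> Li2 1 + Li2 (1 - 1) + 0) (at_left 1)" unfolding g_def[abs_def]
      by (intro tendsto_add continuous_on_Icc_at_leftD[OF cl assms(2)]
            continuous_on_Icc_at_leftD[OF cl2 assms(2)] l3)
    then show "(g \<longlongrightarrow> g 1) (at_left 1)" by (simp add: g_def)
    have r3: "((\<lambda>x. ln x * ln (1 - x)) \<longlongrightarrow> ln p * ln (1 - p)) (at_right p)"
      using assms by (intro tendsto_intros) (auto intro!: tendsto_ident_at)
    have "(g \<longlongrightarrow> Li2 p + Li2 (1 - p) + ln p * ln (1 - p)) (at_right p)" unfolding g_def[abs_def]
      by (intro tendsto_add continuous_on_Icc_at_rightD[OF cl assms(2)]
            continuous_on_Icc_at_rightD[OF cl2 assms(2)] r3)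
    then show "(g \<longlongrightarrow> g p) (at_right p)" by (simp add: g_def)
    show "(g \<longlongrightarrow> g x) (at x)" if "p < x" "x < 1" for x
      using d[OF that] DERIV_isCont isCont_def by blast
  qed (use assms in auto)
  have "g 1 = g p" by (rule DERIV_isconst_end[OF assms(2) c d]) auto
  then have "pi\<^sup>2/6 = Li2 p + Li2 (1 - p) + ln p * ln (1 - p)" by (simp add: g_def Li2_one Li2_zero)
  then show ?thesis by linarith
qed

lemma PsiL_eq: "0 < x \<Longrightarrow> x < 1 \<Longrightarrow> Psi x = PsiL x" by (simp add: Psi_def PsiL_def)
lemma PsiR_eq: "1 < x \<Longrightarrow> Psi x = PsiR x" by (simp add: Psi_def PsiR_def)

lemma match_id_pos:
  assumes a: "0 < a" "a < 1"
  shows "pi\<^sup>2/6 - 1 + F (1/(1+a)) a - F (1/2) a - G (1/(1+a)) a + G (1/(1-a)) a = 0"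
proof -
  define L where "L = ln (2::real)"
  define La where "La = ln a"
  define L1 where "L1 = ln (1 + a)"
  define L2 where "L2 = ln (1 - a)"
  define r where "r = (1 - a) / (1 + a)"
  define p where "p = (1 + a) / 2"
  have r: "0 < r" "r < 1" using a by (auto simp: r_def)
  have p: "0 < p" "p < 1" using a by (auto simp: p_def)
  have lr: "ln r = L2 - L1" using a by (simp add: r_def ln_div L1_def L2_def)
  have lp: "ln p = L1 - L" using a by (simp add: p_def ln_div L1_def L_def)
  have lq: "ln (1 - p) = L2 - L"
  proof -
    have e: "1 - p = (1 - a) / 2" by (simp add: p_def field_simps)
    show ?thesis unfolding e using a by (simp add: ln_div L2_def L_def)
  qed
  have l2a: "ln (2 * a / (1 + a)) = L + La - L1" using a by (simp add: ln_div ln_mult L_def La_def L1_def)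
  have h1: "Psi (1 / (1 + a) * (1 + a)) = 0" using a by (simp add: Psi_def)
  have h2: "Psi (1 / (1 + a) * (1 - a)) = - Li2 r + (2 * a / (1 + a)) * (L + La - L2) + (L2 - L1) - (L2 - L1)\<^sup>2 / 2 + pi\<^sup>2/6"
  proof -
    have e: "1 / (1 + a) * (1 - a) = r" by (simp add: r_def)
    have i: "inverse r - 1 = 2 * a / (1 - a)" using a by (simp add: r_def field_simps)
    have li: "ln (2 * a / (1 - a)) = L + La - L2" using a by (simp add: ln_div ln_mult L_def La_def L2_def)
    have o: "1 - r = 2 * a / (1 + a)" using a by (simp add: r_def field_simps)
    show ?thesis unfolding e using r by (simp add: PsiL_eq PsiL_def i li o lr)
  qed
  have h3: "Psi (1 / 2 * (1 + a)) = - Li2 p + (1 - a) / 2 * (L2 - L1) + (L1 - L) - (L1 - L)\<^sup>2 / 2 + pi\<^sup>2/6"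
  proof -
    have e: "1 / 2 * (1 + a) = p" by (simp add: p_def)
    have i: "inverse p - 1 = (1 - a) / (1 + a)" using a by (simp add: p_def field_simps)
    have li: "ln ((1 - a) / (1 + a)) = L2 - L1" using a by (simp add: ln_div L1_def L2_def)
    have o: "1 - p = (1 - a) / 2" by (simp add: p_def field_simps)
    show ?thesis unfolding e using p by (simp add: PsiL_eq PsiL_def i li o lp)
  qed
  have h4: "Psi (1 / 2 * (1 - a)) = - Li2 (1 - p) + (1 + a) / 2 * (L1 - L2) + (L2 - L) - (L2 - L)\<^sup>2 / 2 + pi\<^sup>2/6"
  proof -
    have e: "1 / 2 * (1 - a) = 1 - p" by (simp add: p_def field_simps)
    have i: "inverse (1 - p) - 1 = (1 + a) / (1 - a)" using a by (simp add: p_def field_simps)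
    have li: "ln ((1 + a) / (1 - a)) = L1 - L2" using a by (simp add: ln_div L1_def L2_def)
    have o: "1 - (1 - p) = (1 + a) / 2" by (simp add: p_def field_simps)
    show ?thesis unfolding e using p by (simp add: PsiL_eq PsiL_def i li o lq)
  qed
  have h5: "Psi (1 / (1 - a) * (1 + a)) = Li2 r - (2 * a / (1 - a)) * (L + La - L1) + (L1 - L2) - pi\<^sup>2/6"
  proof -
    have e: "1 / (1 - a) * (1 + a) = (1 + a) / (1 - a)" by simp
    have g: "1 < (1 + a) / (1 - a)" using a by simp
    have i: "inverse ((1 + a) / (1 - a)) = r" by (simp add: r_def)
    have o: "1 - r = 2 * a / (1 + a)" using a by (simp add: r_def field_simps)
    have m: "(1 + a) / (1 - a) - 1 = 2 * a / (1 - a)" using a by (simp add: field_simps)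
    have li: "ln ((1 + a) / (1 - a)) = L1 - L2" using a by (simp add: ln_div L1_def L2_def)
    show ?thesis unfolding e PsiR_eq[OF g] PsiR_def i o m li l2a ..
  qed
  have refl: "Li2 p + Li2 (1 - p) = pi\<^sup>2/6 - (L1 - L) * (L2 - L)"
    using Li2_reflection[OF p] lp lq by simp
  have ln1: "ln (1 / (1 + a)) = - L1" "ln (1 / 2) = - L" "ln (1 / (1 - a)) = - L2"
    using a by (auto simp: ln_div L1_def L2_def L_def)
  have ln2: "ln ((1 - a) / (1 + a)) = L2 - L1" using a by (simp add: ln_div L1_def L2_def)
  have aa: "\<bar>a\<bar> = a" using a by simp
  define u where "u = 1 / (1 + a)"
  define v where "v = 1 / (1 - a)"
  define M where "M = L + La - L1"
  have pa: "1 + a > 0" "1 - a > 0" using a by auto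
  have e1: "2 * a / (1 + a) = 2 - 2 * u" using pa by (simp add: u_def divide_simps)
  have e2: "2 * a / (1 - a) = 2 * v - 2" using pa by (simp add: v_def divide_simps)
  have e3: "2 * (1 + a * (L2 - L1)) * (1/(1+a)) = 2 * (u + (1 - u) * (L2 - L1))"
    using pa by (simp add: u_def divide_simps)
  have e4: "(1 - a + 2 * a * M) * (1/(1+a)) = u - (1 - u) + 2 * (1 - u) * M"
    using pa by (simp add: u_def divide_simps)
  have e5: "(1 - a + 2 * a * M) * (1/(1-a)) = 1 + 2 * (v - 1) * M"
    using pa by (simp add: v_def divide_simps)
  have refl': "Li2 (1 - p) = pi\<^sup>2/6 - (L1 - L) * (L2 - L) - Li2 p" using refl by simp
  show ?thesis
    unfolding F_def G_def aa h1 h2 h3 h4 h5 ln1 ln2 l2a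
    unfolding refl' M_def[symmetric] e1 e2 e3 e4 e5
    by (simp add: algebra_simps power2_eq_square M_def field_simps)
qed

definition Q :: "real \<Rightarrow> real \<Rightarrow> real \<Rightarrow> real" where
  "Q a s z = (if a + z \<noteq> 0 then Upsilon (1 + (s - max \<bar>a\<bar> \<bar>z\<bar> - 1) / \<bar>a + z\<bar>)
      else if s < 1 + \<bar>a\<bar> then 0 else 1)"

lemma Phi0_Q: "Phi0 \<eta> w z = 6 / pi\<^sup>2 * Q w (inverse \<eta>) z"
  by (simp add: Phi0_def Q_def)

lemma U0: "x \<le> 0 \<Longrightarrow> Upsilon x = 0" by (simp add: Upsilon_def)
lemma U1: "1 \<le> x \<Longrightarrow> Upsilon x = 1" by (simp add: Upsilon_def)
lemma Uid: "0 \<le> x \<Longrightarrow> x \<le> 1 \<Longrightarrow> Upsilon x = x" by (auto simp: Upsilon_def)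

lemma Q_R1: assumes "0 \<le> a" "a < 1" "2 \<le> s" "-1 \<le> z" "z \<le> 1" shows "Q a s z = 1"
proof (cases "a + z = 0")
  case True then show ?thesis using assms by (simp add: Q_def)
next
  case False
  have d: "\<bar>a + z\<bar> > 0" using False by simp
  have "0 \<le> s - max \<bar>a\<bar> \<bar>z\<bar> - 1" using assms by auto
  then have "0 \<le> (s - max \<bar>a\<bar> \<bar>z\<bar> - 1) / \<bar>a + z\<bar>" using d by simp
  then show ?thesis using False by (simp add: Q_def U1)
qed

lemma Q_R4: assumes "0 \<le> a" "s < 1 - a" "-1 \<le> z" "z \<le> 1" shows "Q a s z = 0"
proof (cases "a + z = 0")
  case True then show ?thesis using assms by (simp add: Q_def)
next
  case False
  have d: "\<bar>a + z\<bar> > 0" using False by simp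
  have "s - max \<bar>a\<bar> \<bar>z\<bar> - 1 \<le> - \<bar>a + z\<bar>" using assms by (auto simp: abs_if max_def)
  then have "(s - max \<bar>a\<bar> \<bar>z\<bar> - 1) / \<bar>a + z\<bar> \<le> -1" using d by (simp add: divide_le_eq)
  then show ?thesis using False by (simp add: Q_def U0)
qed

lemma Q_mid_const: assumes "0 \<le> a" "1 + a \<le> s" "-(s-1) \<le> z" "z \<le> s - 1" shows "Q a s z = 1"
proof (cases "a + z = 0")
  case True then show ?thesis using assms by (simp add: Q_def)
next
  case False
  have d: "\<bar>a + z\<bar> > 0" using False by simp
  have "0 \<le> s - max \<bar>a\<bar> \<bar>z\<bar> - 1" using assms by auto
  then have "0 \<le> (s - max \<bar>a\<bar> \<bar>z\<bar> - 1) / \<bar>a + z\<bar>" using d by simp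
  then show ?thesis using False by (simp add: Q_def U1)
qed

lemma Q_mid_right: assumes "0 \<le> a" "1 + a \<le> s" "s - 1 < z" shows "Q a s z = (a + s - 1) / (a + z)"
proof -
  have z: "z > a" "z > 0" "a + z > 0" using assms by auto
  have arg: "1 + (s - max \<bar>a\<bar> \<bar>z\<bar> - 1) / \<bar>a + z\<bar> = (a + s - 1) / (a + z)"
    using z assms by (simp add: max_def field_simps)
  have "0 \<le> (a + s - 1) / (a + z)" "(a + s - 1) / (a + z) \<le> 1" using z assms by (auto simp: divide_le_eq)
  then show ?thesis using z arg by (simp add: Q_def Uid)
qed

lemma Q_mid_left: assumes "0 \<le> a" "1 + a \<le> s" "z < -(s - 1)" shows "Q a s z = (s - 1 - a) / (- z - a)"
proof -
  have z: "-z > a" "z < 0" "a + z < 0" using assms by auto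
  have arg: "1 + (s - max \<bar>a\<bar> \<bar>z\<bar> - 1) / \<bar>a + z\<bar> = (s - 1 - a) / (- z - a)"
    using z assms by (simp add: max_def field_simps)
  have "0 \<le> (s - 1 - a) / (- z - a)" "(s - 1 - a) / (- z - a) \<le> 1" using z assms by (auto simp: divide_le_eq)
  then show ?thesis using z arg by (simp add: Q_def Uid)
qed

lemma Q_R3_1: assumes "0 < a" "s < 1 + a" "z < -a" shows "Q a s z = 0"
proof -
  have z: "-z > a" "z < 0" "a + z < 0" using assms by auto
  have arg: "1 + (s - max \<bar>a\<bar> \<bar>z\<bar> - 1) / \<bar>a + z\<bar> = (s - 1 - a) / (- z - a)"
    using z assms by (simp add: max_def field_simps)
  have "(s - 1 - a) / (- z - a) \<le> 0" using z assms by (auto simp: divide_le_0_iff)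
  then show ?thesis using z arg by (simp add: Q_def U0)
qed

lemma Q_R3_2: assumes "0 < a" "1 - a \<le> s" "s < 1 + a" "-a \<le> z" "z \<le> 1 - s" shows "Q a s z = 0"
proof (cases "a + z = 0")
  case True then show ?thesis using assms by (simp add: Q_def)
next
  case False
  have z: "a + z > 0" "\<bar>z\<bar> \<le> a" using assms False by auto
  have arg: "1 + (s - max \<bar>a\<bar> \<bar>z\<bar> - 1) / \<bar>a + z\<bar> = (z + s - 1) / (a + z)"
    using z assms by (simp add: max_def field_simps)
  have "(z + s - 1) / (a + z) \<le> 0" using z assms by (auto simp: divide_le_0_iff)
  then show ?thesis using z arg by (simp add: Q_def U0)
qed

lemma Q_R3_3: assumes "0 < a" "s < 1 + a" "1 - s \<le> z" "z \<le> a" shows "Q a s z = (z + s - 1) / (a + z)"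
proof -
  have z: "a + z > 0" "\<bar>z\<bar> \<le> a" using assms by auto
  have arg: "1 + (s - max \<bar>a\<bar> \<bar>z\<bar> - 1) / \<bar>a + z\<bar> = (z + s - 1) / (a + z)"
    using z assms by (simp add: max_def field_simps)
  have "0 \<le> (z + s - 1) / (a + z)" "(z + s - 1) / (a + z) \<le> 1" using z assms by (auto simp: divide_le_eq)
  then show ?thesis using z arg by (simp add: Q_def Uid)
qed

lemma Q_R3_4: assumes "0 < a" "1 - a \<le> s" "s < 1 + a" "a \<le> z" shows "Q a s z = (a + s - 1) / (a + z)"
proof -
  have z: "a + z > 0" "z > 0" using assms by auto
  have arg: "1 + (s - max \<bar>a\<bar> \<bar>z\<bar> - 1) / \<bar>a + z\<bar> = (a + s - 1) / (a + z)"
    using z assms by (simp add: max_def field_simps)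
  have "0 \<le> (a + s - 1) / (a + z)" "(a + s - 1) / (a + z) \<le> 1" using z assms by (auto simp: divide_le_eq)
  then show ?thesis using z arg by (simp add: Q_def Uid)
qed

lemma ftc_piece:
  fixes f g G :: "real \<Rightarrow> real"
  assumes "u \<le> v" "continuous_on {u..v} G"
    "\<And>x. u < x \<Longrightarrow> x < v \<Longrightarrow> (G has_real_derivative g x) (at x)"
    "\<And>x. u < x \<Longrightarrow> x < v \<Longrightarrow> g x = f x"
  shows "(f has_integral (G v - G u)) {u..v}"
proof -
  have "(g has_integral (G v - G u)) {u..v}"
    by (rule fundamental_theorem_of_calculus_interior)
       (use assms in \<open>auto simp: has_real_derivative_iff_has_vector_derivative[symmetric]\<close>)
  then show ?thesis
    using has_integral_spike_finite_eq[where S="{u, v}" and T="{u..v}" and f=g and g=f] assms(4) by auto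
qed

definition Jn :: "real \<Rightarrow> real \<Rightarrow> real" where
  "Jn a s = (if 2 \<le> s then 2
    else if 1 + a \<le> s then 2 * (s - 1) + (a + s - 1) * (ln (1 + a) - ln (a + s - 1))
          + (s - 1 - a) * (ln (1 - a) - ln (s - 1 - a))
    else if 1 - a \<le> s then (a + s - 1) - (1 + a - s) * (ln (2 * a) - ln (1 + a - s))
          + (a + s - 1) * (ln (1 + a) - ln (2 * a))
    else 0)"

lemma Q_int_R1: assumes "0 \<le> a" "a < 1" "2 \<le> s" shows "(Q a s has_integral 2) {-1..1}"
proof -
  have "(Q a s has_integral ((\<lambda>x. x) 1 - (\<lambda>x. x) (-1))) {-1..1}"
  proof (rule ftc_piece[where g="\<lambda>_. 1"])
    show "continuous_on {- 1..1} (\<lambda>x::real. x)" by (rule continuous_on_id)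
    fix x :: real assume x: "-1 < x" "x < 1"
    show "((\<lambda>x. x) has_real_derivative 1) (at x)" by (rule DERIV_ident)
    show "1 = Q a s x" using Q_R1[of a s x] assms x by simp
  qed simp
  then show ?thesis by simp
qed

lemma Q_int_R4: assumes "0 \<le> a" "s < 1 - a" shows "(Q a s has_integral 0) {-1..1}"
proof -
  have "(Q a s has_integral ((\<lambda>x. 0) 1 - (\<lambda>x. 0) (-1::real))) {-1..1}"
  proof (rule ftc_piece[where g="\<lambda>_. 0"])
    show "continuous_on {- 1..1} (\<lambda>x::real. 0::real)" by (rule continuous_on_const)
    fix x :: real assume x: "-1 < x" "x < 1"
    show "((\<lambda>x. 0) has_real_derivative 0) (at x)" by (rule DERIV_const)
    show "0 = Q a s x" using Q_R4[of a s x] assms x by simp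
  qed simp
  then show ?thesis by simp
qed

lemma cont_kln: fixes h :: "real \<Rightarrow> real" and k :: real
  assumes "k = 0 \<or> (\<forall>x\<in>S. 0 < h x)" "continuous_on S h"
  shows "continuous_on S (\<lambda>x. k * ln (h x))"
proof (cases "k = 0")
  case False
  then have "\<forall>x\<in>S. 0 < h x" using assms by auto
  then have "\<forall>x\<in>S. h x \<noteq> 0" by force
  then show ?thesis using assms(2) by (intro continuous_intros continuous_on_ln)
qed simp

lemma Q_int_R2: assumes a: "0 \<le> a" "a < 1" and s: "1 + a \<le> s" "s < 2"
  shows "(Q a s has_integral Jn a s) {-1..1}"
proof -
  define t where "t = s - 1"
  have t: "a \<le> t" "t < 1" "0 \<le> t" using a s by (auto simp: t_def)
  have I1: "(Q a s has_integral ((\<lambda>z. - (t - a) * ln (- z - a)) (-t) - (\<lambda>z. - (t - a) * ln (- z - a)) (-1))) {-1..-t}"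
  proof (rule ftc_piece[where g="\<lambda>z. (t - a) / (- z - a)"])
    show "continuous_on {-1..-t} (\<lambda>z. - (t - a) * ln (- z - a))"
      by (rule cont_kln) (use t in \<open>auto intro!: continuous_intros\<close>)
    fix x assume x: "-1 < x" "x < -t"
    show "((\<lambda>z. - (t - a) * ln (- z - a)) has_real_derivative (t - a) / (- x - a)) (at x)"
    proof -
      have "- x - a > 0" using x t by auto
      then show ?thesis
        apply (auto intro!: derivative_eq_intros)
        apply (metis minus_diff_eq minus_divide_left)
        done
    qed
    show "(t - a) / (- x - a) = Q a s x" using Q_mid_left[of a s x] x a s by (simp add: t_def)
  qed (use t in auto)
  have I2: "(Q a s has_integral ((\<lambda>z. z) t - (\<lambda>z. z) (-t))) {-t..t}"
    by (rule ftc_piece[where g="\<lambda>_. 1"]) (use a s t in \<open>auto intro!: derivative_eq_intros continuous_intros simp: t_def Q_mid_const\<close>)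
  have I3: "(Q a s has_integral ((\<lambda>z. (a + t) * ln (a + z)) 1 - (\<lambda>z. (a + t) * ln (a + z)) t)) {t..1}"
  proof (rule ftc_piece[where g="\<lambda>z. (a + t) / (a + z)"])
    show "continuous_on {t..1} (\<lambda>z. (a + t) * ln (a + z))"
      by (rule cont_kln) (use t a in \<open>auto intro!: continuous_intros\<close>)
    fix x assume x: "t < x" "x < 1"
    show "((\<lambda>z. (a + t) * ln (a + z)) has_real_derivative (a + t) / (a + x)) (at x)"
      using x t a by (auto intro!: derivative_eq_intros)
    show "(a + t) / (a + x) = Q a s x" using Q_mid_right[of a s x] x a s by (simp add: t_def)
  qed (use t in auto)
  have J: "(Q a s has_integral (((\<lambda>z. - (t - a) * ln (- z - a)) (-t) - (\<lambda>z. - (t - a) * ln (- z - a)) (-1))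
     + ((\<lambda>z. z) t - (\<lambda>z. z) (-t)))) {-1..t}"
    by (rule has_integral_combine[OF _ _ I1 I2]) (use t in auto)
  have "(Q a s has_integral ((((\<lambda>z. - (t - a) * ln (- z - a)) (-t) - (\<lambda>z. - (t - a) * ln (- z - a)) (-1))
     + ((\<lambda>z. z) t - (\<lambda>z. z) (-t))) + ((\<lambda>z. (a + t) * ln (a + z)) 1 - (\<lambda>z. (a + t) * ln (a + z)) t))) {-1..1}"
    by (rule has_integral_combine[OF _ _ J I3]) (use t in auto)
  moreover have "(((\<lambda>z. - (t - a) * ln (- z - a)) (-t) - (\<lambda>z. - (t - a) * ln (- z - a)) (-1))
     + ((\<lambda>z. z) t - (\<lambda>z. z) (-t))) + ((\<lambda>z. (a + t) * ln (a + z)) 1 - (\<lambda>z. (a + t) * ln (a + z)) t) = Jn a s"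
    using s by (simp add: Jn_def t_def algebra_simps)
  ultimately show ?thesis by simp
qed

lemma Q_int_R3: assumes a: "0 < a" "a < 1" and s: "1 - a \<le> s" "s < 1 + a"
  shows "(Q a s has_integral Jn a s) {-1..1}"
proof -
  define t where "t = s - 1"
  have t: "-a \<le> t" "t < a" using a s by (auto simp: t_def)
  have I1: "(Q a s has_integral ((\<lambda>z. 0) (-a) - (\<lambda>z. 0) (-1::real))) {-1..-a}"
    by (rule ftc_piece[where g="\<lambda>_. 0"]) (use a s t in \<open>auto intro!: derivative_eq_intros continuous_intros simp: Q_R3_1\<close>)
  have I2: "(Q a s has_integral ((\<lambda>z. 0) (-t) - (\<lambda>z. 0) (-a::real))) {-a..-t}"
    by (rule ftc_piece[where g="\<lambda>_. 0"]) (use a s t in \<open>auto intro!: derivative_eq_intros continuous_intros simp: t_def Q_R3_2\<close>)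
  have I3: "(Q a s has_integral ((\<lambda>z. z - (a - t) * ln (a + z)) a - (\<lambda>z. z - (a - t) * ln (a + z)) (-t))) {-t..a}"
  proof (rule ftc_piece[where g="\<lambda>z. 1 - (a - t) / (a + z)"])
    show "continuous_on {-t..a} (\<lambda>z. z - (a - t) * ln (a + z))"
      using t a by (auto intro!: continuous_intros)
    fix x assume x: "-t < x" "x < a"
    show "((\<lambda>z. z - (a - t) * ln (a + z)) has_real_derivative 1 - (a - t) / (a + x)) (at x)"
    proof -
      have "a + x > 0" using x t by auto
      then show ?thesis by (auto intro!: derivative_eq_intros)
    qed
    have "a + x > 0" using x t by auto
    then show "1 - (a - t) / (a + x) = Q a s x" using Q_R3_3[of a s x] x a s
      by (simp add: t_def field_simps)
  qed (use t in auto)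
  have I4: "(Q a s has_integral ((\<lambda>z. (a + t) * ln (a + z)) 1 - (\<lambda>z. (a + t) * ln (a + z)) a)) {a..1}"
  proof (rule ftc_piece[where g="\<lambda>z. (a + t) / (a + z)"])
    show "continuous_on {a..1} (\<lambda>z. (a + t) * ln (a + z))"
      using t a by (auto intro!: continuous_intros)
    fix x assume x: "a < x" "x < 1"
    show "((\<lambda>z. (a + t) * ln (a + z)) has_real_derivative (a + t) / (a + x)) (at x)"
      using x t a by (auto intro!: derivative_eq_intros)
    show "(a + t) / (a + x) = Q a s x" using Q_R3_4[of a s x] x a s by (simp add: t_def)
  qed (use a in auto)
  have J1: "(Q a s has_integral (0 + 0)) {-1..-t}"
    using has_integral_combine[OF _ _ I1 I2] t a by simp
  have J2: "(Q a s has_integral ((0 + 0) + ((\<lambda>z. z - (a - t) * ln (a + z)) a - (\<lambda>z. z - (a - t) * ln (a + z)) (-t)))) {-1..a}"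
    by (rule has_integral_combine[OF _ _ J1 I3]) (use t a in auto)
  have "(Q a s has_integral (((0 + 0) + ((\<lambda>z. z - (a - t) * ln (a + z)) a - (\<lambda>z. z - (a - t) * ln (a + z)) (-t)))
      + ((\<lambda>z. (a + t) * ln (a + z)) 1 - (\<lambda>z. (a + t) * ln (a + z)) a))) {-1..1}"
    by (rule has_integral_combine[OF _ _ J2 I4]) (use t a in auto)
  moreover have "((0 + 0) + ((\<lambda>z. z - (a - t) * ln (a + z)) a - (\<lambda>z. z - (a - t) * ln (a + z)) (-t)))
      + ((\<lambda>z. (a + t) * ln (a + z)) 1 - (\<lambda>z. (a + t) * ln (a + z)) a) = Jn a s"
  proof -
    have "\<not> 2 \<le> s" "\<not> 1 + a \<le> s" using a s by auto
    moreover have "a + a = 2 * a" "a - (s - 1) = 1 + a - s" "a + - (s - 1) = 1 + a - s" by auto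
    ultimately show ?thesis using s by (simp add: Jn_def t_def algebra_simps)
  qed
  ultimately show ?thesis by simp
qed

lemma Q_int: assumes "0 \<le> a" "a < 1" shows "(Q a s has_integral Jn a s) {-1..1}"
proof -
  consider "2 \<le> s" | "1 + a \<le> s" "s < 2" | "0 < a" "1 - a \<le> s" "s < 1 + a" | "s < 1 - a"
    using assms by force
  then show ?thesis
  proof cases
    case 1 then show ?thesis using Q_int_R1[OF assms 1] by (simp add: Jn_def)
  next
    case 2 then show ?thesis using Q_int_R2[OF assms] by simp
  next
    case 3 then show ?thesis using Q_int_R3 assms by simp
  next
    case 4
    then have "Jn a s = 0" using assms by (simp add: Jn_def)
    then show ?thesis using Q_int_R4[OF assms(1) 4] by simp
  qed
qed

lemma LBINT_from_has_integral:
  fixes f :: "real \<Rightarrow> real"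
  assumes hi: "(f has_integral I) S" and nn: "\<And>x. x \<in> S \<Longrightarrow> 0 \<le> f x"
    and m: "f \<in> borel_measurable borel" and Sm: "S \<in> sets borel"
  shows "(LBINT x:S. f x) = I"
proof -
  have ai: "f absolutely_integrable_on S"
    by (rule nonnegative_absolutely_integrable_1) (use hi nn in \<open>auto simp: integrable_on_def\<close>)
  have "(LINT x:S|lebesgue. f x) = integral S f"
    by (rule set_lebesgue_integral_eq_integral(2)[OF ai])
  also have "\<dots> = I" using hi by (rule integral_unique)
  finally have l: "(LINT x:S|lebesgue. f x) = I" .
  have mm: "(\<lambda>x. indicator S x *\<^sub>R f x) \<in> lborel \<rightarrow>\<^sub>M borel"
    using m Sm by measurable
  have "(LINT x:S|lebesgue. f x) = (LBINT x:S. f x)"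
    unfolding set_lebesgue_integral_def by (rule integral_completion[OF mm])
  with l show ?thesis by simp
qed

lemma Upsilon_meas[measurable]: "Upsilon \<in> borel_measurable borel"
  unfolding Upsilon_def[abs_def] by measurable

lemma Phi0_meas: "(\<lambda>z. Phi0 \<eta> w z) \<in> borel_measurable borel"
  unfolding Phi0_def by measurable

lemma Jn_meas: "(\<lambda>\<eta>. c * Jn a (inverse \<eta>)) \<in> borel_measurable borel"
  unfolding Jn_def by measurable

lemma Q_reflect: "Q (-w) s (-z) = Q w s z"
proof -
  have "\<bar>-w - z\<bar> = \<bar>w + z\<bar>" by linarith
  then show ?thesis by (simp add: Q_def)
qed

lemma Q_int_w: assumes "-1 < w" "w < 1" shows "(Q w s has_integral Jn \<bar>w\<bar> s) {-1..1}"
proof (cases "0 \<le> w")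
  case True then show ?thesis using Q_int[of w s] assms by simp
next
  case False
  have q: "(Q \<bar>w\<bar> s has_integral Jn \<bar>w\<bar> s) {-1..1}" using Q_int[of "\<bar>w\<bar>" s] assms by simp
  have e: "(\<lambda>z. Q \<bar>w\<bar> s (- z)) = Q w s"
  proof
    fix z have "\<bar>w\<bar> = - w" using False by simp
    then show "Q \<bar>w\<bar> s (- z) = Q w s z" using Q_reflect[of w s "z"] by simp
  qed
  have "((\<lambda>z. Q \<bar>w\<bar> s (- z)) has_integral Jn \<bar>w\<bar> s) {-1..-(-1)}"
    by (rule has_integral_reflect_real[THEN iffD2]) (rule q)
  then show ?thesis unfolding e by simp
qed

lemma inner_LBINT: assumes "-1 < w" "w < 1"
  shows "(LBINT z:{-1..1}. Phi0 \<eta> w z) = 6 / pi\<^sup>2 * Jn \<bar>w\<bar> (inverse \<eta>)"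
    and "0 \<le> Jn \<bar>w\<bar> (inverse \<eta>)"
proof -
  have hi: "((\<lambda>z. Phi0 \<eta> w z) has_integral 6 / pi\<^sup>2 * Jn \<bar>w\<bar> (inverse \<eta>)) {-1..1}"
    unfolding Phi0_Q by (rule has_integral_mult_right[OF Q_int_w[OF assms]])
  have nn: "0 \<le> Phi0 \<eta> w z" for z by (simp add: Phi0_def Upsilon_def)
  show "(LBINT z:{-1..1}. Phi0 \<eta> w z) = 6 / pi\<^sup>2 * Jn \<bar>w\<bar> (inverse \<eta>)"
    by (rule LBINT_from_has_integral[OF hi nn Phi0_meas]) simp
  have "0 \<le> 6 / pi\<^sup>2 * Jn \<bar>w\<bar> (inverse \<eta>)"
    by (rule has_integral_nonneg[OF hi]) (use nn in auto)
  then show "0 \<le> Jn \<bar>w\<bar> (inverse \<eta>)" using pi_gt_zero by (simp add: zero_le_divide_iff zero_le_mult_iff)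
qed

lemma Psi_deriv_chain[derivative_intros]:
  assumes "(g has_real_derivative g') (at x)" "0 < g x" "g x \<noteq> 1"
  shows "((\<lambda>x. Psi (g x)) has_real_derivative ((1 / g x - 1) * ln \<bar>1 / g x - 1\<bar> * g')) (at x)"
  using DERIV_chain2[OF Psi_deriv[OF assms(2,3)] assms(1)] .

lemma G_deriv: assumes a: "0 < a" "a < 1" and x: "1/(1+a) < x" "x < 1/(1-a)" and w: "\<bar>w\<bar> = a"
  shows "((\<lambda>\<xi>. G \<xi> w) has_real_derivative - Jn a (inverse x)) (at x)"
proof -
  define K0 where "K0 = 1 - a + 2 * a * ln (2 * a / (1 + a))"
  have x0: "0 < x" using a x by (smt (verit) divide_pos_pos)
  have x1: "1 < x * (1 + a)" using x a by (simp add: field_simps)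
  have d: "((\<lambda>\<xi>. G \<xi> w) has_real_derivative
      ((1 / (x * (1 + a)) - 1) * ln \<bar>1 / (x * (1 + a)) - 1\<bar> * (1 + a) - 1 / x + K0)) (at x)"
    unfolding G_def w K0_def[symmetric] using x0 x1
    by (auto intro!: derivative_eq_intros)
  define s where "s = inverse x"
  have s: "1 - a < s" "s < 1 + a" using a x x0 by (auto simp: s_def field_simps)
  have nz: "x + a * x \<noteq> 0" using x1 by (simp add: algebra_simps)
  have e1: "(1 / (x * (1 + a)) - 1) * (1 + a) = s - 1 - a" using a x0 nz by (simp add: s_def field_simps)
  have e2: "\<bar>1 / (x * (1 + a)) - 1\<bar> = (1 + a - s) / (1 + a)" using a x0 x1 by (simp add: s_def field_simps)
  have e3: "ln ((1 + a - s) / (1 + a)) = ln (1 + a - s) - ln (1 + a)" using s a by (simp add: ln_div)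
  have e4: "ln (2 * a / (1 + a)) = ln (2 * a) - ln (1 + a)" using a by (simp add: ln_div)
  have "(1 / (x * (1 + a)) - 1) * ln \<bar>1 / (x * (1 + a)) - 1\<bar> * (1 + a) - 1 / x + K0
      = (s - 1 - a) * (ln (1 + a - s) - ln (1 + a)) - s + (1 - a + 2 * a * (ln (2 * a) - ln (1 + a)))"
    unfolding K0_def e4 e2 e3 e1[symmetric] by (simp add: s_def inverse_eq_divide algebra_simps)
  also have "\<dots> = - Jn a s"
    using s a by (simp add: Jn_def algebra_simps)
  finally show ?thesis using d by (simp add: s_def)
qed

lemma F_deriv: assumes a: "0 \<le> a" "a < 1" and x: "1/2 < x" "x < 1/(1+a)" and w: "\<bar>w\<bar> = a"
  shows "((\<lambda>\<xi>. F \<xi> w) has_real_derivative - Jn a (inverse x)) (at x)"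
proof -
  define K0 where "K0 = 2 * (1 + a * ln ((1 - a) / (1 + a)))"
  have x0: "0 < x" using x by simp
  have x1: "x * (1 + a) < 1" using x a by (simp add: field_simps)
  have ax: "0 \<le> a * x" using a x0 by simp
  have eqs: "x * (1 - a) = x - a * x" "x * (1 + a) = x + a * x" by (simp_all add: algebra_simps)
  have x2a: "x * (1 - a) < 1" unfolding eqs(1) using x1 ax unfolding eqs(2) by linarith
  have x2b: "0 < x * (1 - a)" using x0 a by simp
  note x2 = x2a x2b
  have x3: "0 < x * (1 + a)" using x0 a by simp
  have d: "((\<lambda>\<xi>. F \<xi> w) has_real_derivative
      ((1 / (x * (1 + a)) - 1) * ln \<bar>1 / (x * (1 + a)) - 1\<bar> * (1 + a)
      + (1 / (x * (1 - a)) - 1) * ln \<bar>1 / (x * (1 - a)) - 1\<bar> * (1 - a) - 2 * (1 / x) + K0)) (at x)"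
    unfolding F_def w K0_def[symmetric] using x0 x1 x2 x3
    by (auto intro!: derivative_eq_intros)
  define s where "s = inverse x"
  have s: "1 + a < s" "s < 2" using a x x0 by (auto simp: s_def field_simps)
  have nz: "x + a * x \<noteq> 0" "x - a * x \<noteq> 0" using x2 x3 by (auto simp: algebra_simps)
  have e1: "(1 / (x * (1 + a)) - 1) * (1 + a) = s - 1 - a" using a x0 nz by (simp add: s_def field_simps)
  have e2: "\<bar>1 / (x * (1 + a)) - 1\<bar> = (s - 1 - a) / (1 + a)" using a x0 x1 nz by (simp add: s_def field_simps)
  have e1': "(1 / (x * (1 - a)) - 1) * (1 - a) = s - 1 + a" using a x0 nz by (simp add: s_def field_simps)
  have e2': "\<bar>1 / (x * (1 - a)) - 1\<bar> = (s - 1 + a) / (1 - a)" using a x0 x2 nz by (simp add: s_def field_simps)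
  have e3: "ln ((s - 1 - a) / (1 + a)) = ln (s - 1 - a) - ln (1 + a)" using s a by (simp add: ln_div)
  have e3': "ln ((s - 1 + a) / (1 - a)) = ln (s - 1 + a) - ln (1 - a)" using s a by (simp add: ln_div)
  have e4: "ln ((1 - a) / (1 + a)) = ln (1 - a) - ln (1 + a)" using a by (simp add: ln_div)
  have "(1 / (x * (1 + a)) - 1) * ln \<bar>1 / (x * (1 + a)) - 1\<bar> * (1 + a)
      + (1 / (x * (1 - a)) - 1) * ln \<bar>1 / (x * (1 - a)) - 1\<bar> * (1 - a) - 2 * (1 / x) + K0
      = (s - 1 - a) * (ln (s - 1 - a) - ln (1 + a)) + (s - 1 + a) * (ln (s - 1 + a) - ln (1 - a))
        - 2 * s + 2 * (1 + a * (ln (1 - a) - ln (1 + a)))"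
  proof -
    have r1: "(1/(x*(1+a)) - 1) * ln \<bar>1/(x*(1+a)) - 1\<bar> * (1+a) = (s-1-a) * (ln (s-1-a) - ln (1+a))"
    proof -
      have "(1/(x*(1+a)) - 1) * ln \<bar>1/(x*(1+a)) - 1\<bar> * (1+a) = ((1/(x*(1+a)) - 1) * (1+a)) * ln \<bar>1/(x*(1+a)) - 1\<bar>"
        by (simp only: mult_ac)
      also have "\<dots> = (s-1-a) * (ln (s-1-a) - ln (1+a))" by (simp only: e1 e2 e3)
      finally show ?thesis .
    qed
    have r2: "(1/(x*(1-a)) - 1) * ln \<bar>1/(x*(1-a)) - 1\<bar> * (1-a) = (s-1+a) * (ln (s-1+a) - ln (1-a))"
    proof -
      have "(1/(x*(1-a)) - 1) * ln \<bar>1/(x*(1-a)) - 1\<bar> * (1-a) = ((1/(x*(1-a)) - 1) * (1-a)) * ln \<bar>1/(x*(1-a)) - 1\<bar>"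
        by (simp only: mult_ac)
      also have "\<dots> = (s-1+a) * (ln (s-1+a) - ln (1-a))" by (simp only: e1' e2' e3')
      finally show ?thesis .
    qed
    have r3: "1 / x = s" by (simp add: s_def inverse_eq_divide)
    show ?thesis unfolding r1 r2 r3 K0_def e4 by simp
  qed
  also have "\<dots> = - Jn a s"
    using s a by (simp add: Jn_def algebra_simps)
  finally show ?thesis using d by (simp add: s_def)
qed

definition Kf :: "real \<Rightarrow> real \<Rightarrow> real" where "Kf w \<eta> = 6 / pi\<^sup>2 * Jn \<bar>w\<bar> (inverse \<eta>)"
definition f3 :: "real \<Rightarrow> real \<Rightarrow> real" where "f3 w \<xi> = 6 / pi\<^sup>2 * (G \<xi> w - G (1 / (1 - \<bar>w\<bar>)) w)"
definition f2 :: "real \<Rightarrow> real \<Rightarrow> real" where "f2 w \<xi> = 1 + 6 / pi\<^sup>2 * (F \<xi> w - F (1/2) w - 1)"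
definition f1 :: "real \<Rightarrow> real" where "f1 \<xi> = 1 - 12 / pi\<^sup>2 * \<xi>"

lemma Jn_zero: assumes "0 \<le> a" "a < 1" "s \<le> 1 - a" shows "Jn a s = 0"
proof (cases "s < 1 - a")
  case True then show ?thesis using assms by (simp add: Jn_def)
next
  case False
  then have s: "s = 1 - a" using assms by simp
  show ?thesis
  proof (cases "a = 0")
    case True then show ?thesis using s by (simp add: Jn_def)
  next
    case False then show ?thesis using s assms by (simp add: Jn_def)
  qed
qed

lemma Phi_eq_K: assumes "0 < \<xi>" "-1 < w" "w < 1"
  shows "Phi \<xi> w = (LBINT \<eta>:{\<xi>..}. Kf w \<eta>)"
  unfolding Phi_def Kf_def
  by (rule set_lebesgue_integral_cong) (use assms inner_LBINT(1)[OF assms(2,3)] in auto)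

lemma Kf_zero: assumes "-1 < w" "w < 1" "0 < \<eta>" "1 / (1 - \<bar>w\<bar>) \<le> \<eta>" shows "Kf w \<eta> = 0"
proof -
  have p: "0 < 1 / (1 - \<bar>w\<bar>)" using assms by simp
  have "inverse \<eta> \<le> inverse (1 / (1 - \<bar>w\<bar>))" by (rule le_imp_inverse_le[OF assms(4) p])
  then have "inverse \<eta> \<le> 1 - \<bar>w\<bar>" by simp
  then show ?thesis unfolding Kf_def using Jn_zero[of "\<bar>w\<bar>"] assms by simp
qed

lemma Kf_nonneg: "-1 < w \<Longrightarrow> w < 1 \<Longrightarrow> 0 \<le> Kf w \<eta>"
  unfolding Kf_def using inner_LBINT(2) by simp

lemma Phi_large: assumes "-1 < w" "w < 1" "1 / (1 - \<bar>w\<bar>) \<le> \<xi>" shows "Phi \<xi> w = 0"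
proof -
  have T: "0 < 1 / (1 - \<bar>w\<bar>)" using assms by simp
  then have x: "0 < \<xi>" using assms by linarith
  have "Phi \<xi> w = (LBINT \<eta>:{\<xi>..}. Kf w \<eta>)" by (rule Phi_eq_K[OF x assms(1,2)])
  also have "\<dots> = (LBINT \<eta>:{\<xi>..}. (0::real))"
    by (rule set_lebesgue_integral_cong) (use assms x Kf_zero in auto)
  finally show ?thesis by simp
qed

lemma Phi_value: assumes w: "-1 < w" "w < 1" and x: "0 < \<xi>" "\<xi> < 1 / (1 - \<bar>w\<bar>)"
  and hi: "(Kf w has_integral V) {\<xi>..1 / (1 - \<bar>w\<bar>)}"
  shows "Phi \<xi> w = V"
proof -
  let ?T = "1 / (1 - \<bar>w\<bar>)"
  have "Phi \<xi> w = (LBINT \<eta>:{\<xi>..}. Kf w \<eta>)" by (rule Phi_eq_K[OF x(1) w])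
  also have "\<dots> = (LBINT \<eta>:{\<xi>..?T}. Kf w \<eta>)"
  proof -
    have "(\<lambda>\<eta>. indicator {\<xi>..} \<eta> *\<^sub>R Kf w \<eta>) = (\<lambda>\<eta>. indicator {\<xi>..?T} \<eta> *\<^sub>R Kf w \<eta>)"
    proof
      fix \<eta>
      show "indicator {\<xi>..} \<eta> *\<^sub>R Kf w \<eta> = indicator {\<xi>..?T} \<eta> *\<^sub>R Kf w \<eta>"
      proof (cases "?T < \<eta>")
        case True
        then have "Kf w \<eta> = 0" using Kf_zero[OF w] x by force
        then show ?thesis by simp
      qed (auto simp: indicator_def)
    qed
    then show ?thesis unfolding set_lebesgue_integral_def by simp
  qed
  also have "\<dots> = V"
  proof (rule LBINT_from_has_integral[OF hi])
    show "Kf w \<in> borel_measurable borel" unfolding Kf_def[abs_def] by (rule Jn_meas)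
  qed (use Kf_nonneg[OF w] in auto)
  finally show ?thesis .
qed

lemma piece3: assumes w: "-1 < w" "w < 1" and pq: "1/(1+\<bar>w\<bar>) \<le> p" "p \<le> q" "q \<le> 1/(1-\<bar>w\<bar>)"
  shows "(Kf w has_integral (f3 w p - f3 w q)) {p..q}"
proof -
  define a where "a = \<bar>w\<bar>"
  have a: "0 \<le> a" "a < 1" using w by (auto simp: a_def)
  have p0: "0 < p" using pq a by (smt (verit) a_def divide_pos_pos)
  have "((\<lambda>x. - Kf w x) has_integral (f3 w q - f3 w p)) {p..q}"
  proof (rule ftc_piece[where g="\<lambda>x. - Kf w x"])
    show "continuous_on {p..q} (f3 w)"
      unfolding f3_def[abs_def] G_def
    proof (intro continuous_intros)
      show "continuous_on {p..q} (\<lambda>x. Psi (x * (1 + \<bar>w\<bar>)))"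
        by (rule continuous_on_compose2[OF Psi_cont_on]) (use p0 in \<open>auto intro!: continuous_intros\<close>)
    qed (use p0 in auto)
    fix x assume x: "p < x" "x < q"
    have x': "1/(1+a) < x" "x < 1/(1-a)" using x pq by (auto simp: a_def)
    have "1/(1+a) < 1/(1-a)" using x' by linarith
    then have ap: "0 < a" using a by (cases "a = 0") auto
    have "((\<lambda>\<xi>. 6 / pi\<^sup>2 * (G \<xi> w - G (1 / (1 - \<bar>w\<bar>)) w)) has_real_derivative 6 / pi\<^sup>2 * (- Jn a (inverse x) - 0)) (at x)"
      by (intro DERIV_cmult DERIV_diff G_deriv[OF ap a(2) x'] DERIV_const) (simp add: a_def)
    then show "(f3 w has_real_derivative - Kf w x) (at x)"
      unfolding f3_def[abs_def] Kf_def a_def by simp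
  qed (use pq in auto)
  from has_integral_neg[OF this] show ?thesis by simp
qed

lemma piece2: assumes w: "-1 < w" "w < 1" and pq: "1/2 \<le> p" "p \<le> q" "q \<le> 1/(1+\<bar>w\<bar>)"
  shows "(Kf w has_integral (f2 w p - f2 w q)) {p..q}"
proof -
  define a where "a = \<bar>w\<bar>"
  have a: "0 \<le> a" "a < 1" using w by (auto simp: a_def)
  have p0: "0 < p" using pq by simp
  have "((\<lambda>x. - Kf w x) has_integral (f2 w q - f2 w p)) {p..q}"
  proof (rule ftc_piece[where g="\<lambda>x. - Kf w x"])
    show "continuous_on {p..q} (f2 w)"
      unfolding f2_def[abs_def] F_def
    proof (intro continuous_intros)
      show "continuous_on {p..q} (\<lambda>x. Psi (x * (1 + \<bar>w\<bar>)))"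
        by (rule continuous_on_compose2[OF Psi_cont_on]) (use p0 in \<open>auto intro!: continuous_intros\<close>)
      show "continuous_on {p..q} (\<lambda>x. Psi (x * (1 - \<bar>w\<bar>)))"
        by (rule continuous_on_compose2[OF Psi_cont_on]) (use p0 w in \<open>auto intro!: continuous_intros\<close>)
    qed (use p0 in auto)
    fix x assume x: "p < x" "x < q"
    have x': "1/2 < x" "x < 1/(1+a)" using x pq by (auto simp: a_def)
    have "((\<lambda>\<xi>. 1 + 6 / pi\<^sup>2 * (F \<xi> w - F (1/2) w - 1)) has_real_derivative 0 + 6 / pi\<^sup>2 * (- Jn a (inverse x) - 0 - 0)) (at x)"
      by (intro DERIV_add DERIV_cmult DERIV_diff F_deriv[OF a x'] DERIV_const) (simp add: a_def)
    then show "(f2 w has_real_derivative - Kf w x) (at x)"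
      unfolding f2_def[abs_def] Kf_def a_def by simp
  qed (use pq in auto)
  from has_integral_neg[OF this] show ?thesis by simp
qed

lemma piece1: assumes w: "-1 < w" "w < 1" and pq: "0 < p" "p \<le> q" "q \<le> 1/2"
  shows "(Kf w has_integral (f1 p - f1 q)) {p..q}"
proof -
  have "(Kf w has_integral ((\<lambda>x. 12 / pi\<^sup>2 * x) q - (\<lambda>x. 12 / pi\<^sup>2 * x) p)) {p..q}"
  proof (rule ftc_piece[where g="\<lambda>x. 12 / pi\<^sup>2"])
    show "continuous_on {p..q} (\<lambda>x. 12 / pi\<^sup>2 * x)" by (intro continuous_intros)
    fix x assume x: "p < x" "x < q"
    have "((\<lambda>x. 12 / pi\<^sup>2 * x) has_real_derivative 12 / pi\<^sup>2 * 1) (at x)"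
      by (rule DERIV_cmult[OF DERIV_ident])
    then show "((\<lambda>x. 12 / pi\<^sup>2 * x) has_real_derivative 12 / pi\<^sup>2) (at x)" by (simp only: mult_1_right)
    have "x \<le> 1/2" "0 < x" using x pq by auto
    then have "2 \<le> inverse x" by (simp add: field_simps)
    then have "Jn \<bar>w\<bar> (inverse x) = 2" by (simp add: Jn_def)
    then show "12 / pi\<^sup>2 = Kf w x" by (simp add: Kf_def)
  qed (use pq in auto)
  then show ?thesis by (simp add: f1_def algebra_simps)
qed

lemma Psi_one: "Psi 1 = 0" by (simp add: Psi_def)

lemma match_id_zero: "pi\<^sup>2/6 - 1 + F 1 0 - F (1/2) 0 = 0"
proof -
  have h: "Psi (1/2) = - Li2 (1/2) + (1/2) * ln (inverse (1/2) - 1) + ln (1/2) - (ln (1/2))\<^sup>2 / 2 + pi\<^sup>2 / 6"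
    by (simp add: Psi_def)
  have r: "Li2 (1/2) + Li2 (1 - 1/2) = pi\<^sup>2/6 - ln (1/2) * ln (1 - 1/2)"
    by (rule Li2_reflection) auto
  have r': "2 * Li2 (1/2) = pi\<^sup>2/6 - (ln (1/2))\<^sup>2" using r by (simp add: power2_eq_square)
  have "F 1 0 = 2" by (simp add: F_def Psi_one)
  moreover have "F (1/2) 0 = 2 * Psi (1/2) - 2 * ln (1/2) + 1" by (simp add: F_def)
  ultimately show ?thesis unfolding h using r' by (simp add: algebra_simps)
qed

lemma F_abs: "F \<xi> \<bar>w\<bar> = F \<xi> w" by (simp add: F_def)
lemma G_abs: "G \<xi> \<bar>w\<bar> = G \<xi> w" by (simp add: G_def)

lemma match: assumes w: "-1 < w" "w < 1"
  shows "f2 w (1/(1+\<bar>w\<bar>)) = f3 w (1/(1+\<bar>w\<bar>))"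
proof (cases "w = 0")
  case True
  have e: "F 1 0 - F (1/2) 0 - 1 = - (pi\<^sup>2/6)" using match_id_zero by linarith
  have "f2 w (1/(1+\<bar>w\<bar>)) = 1 + 6 / pi\<^sup>2 * (F 1 0 - F (1/2) 0 - 1)" using True by (simp add: f2_def)
  also have "\<dots> = 0" unfolding e by simp
  finally show ?thesis using True by (simp add: f3_def)
next
  case False
  define a where "a = \<bar>w\<bar>"
  have a: "0 < a" "a < 1" using w False by (auto simp: a_def)
  have m: "pi\<^sup>2/6 - 1 + F (1/(1+a)) w - F (1/2) w - G (1/(1+a)) w + G (1/(1-a)) w = 0"
    using match_id_pos[OF a] unfolding a_def F_abs G_abs .
  have "f2 w (1/(1+a)) - f3 w (1/(1+a)) = 1 + 6/pi\<^sup>2 * (F (1/(1+a)) w - F (1/2) w - 1 - G (1/(1+a)) w + G (1/(1-a)) w)"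
    unfolding f2_def f3_def a_def by (simp add: field_simps)
  also have "F (1/(1+a)) w - F (1/2) w - 1 - G (1/(1+a)) w + G (1/(1-a)) w = - (pi\<^sup>2/6)"
    using m by linarith
  finally show ?thesis by (simp add: a_def)
qed

theorem mainTheorem2:
  fixes \<xi> w :: real
  assumes "\<xi> > 0" and "-1 < w" and "w < 1"
  shows "(\<xi> \<le> 1/2 \<longrightarrow> Phi \<xi> w = 1 - 12 / pi\<^sup>2 * \<xi>)
       \<and> (1/2 \<le> \<xi> \<and> \<xi> \<le> 1 / (1 + \<bar>w\<bar>) \<longrightarrow>
            Phi \<xi> w = 1 + 6 / pi\<^sup>2 * (F \<xi> w - F (1/2) w - 1))
       \<and> (1 / (1 + \<bar>w\<bar>) \<le> \<xi> \<and> \<xi> \<le> 1 / (1 - \<bar>w\<bar>) \<longrightarrow>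
            Phi \<xi> w = 6 / pi\<^sup>2 * (G \<xi> w - G (1 / (1 - \<bar>w\<bar>)) w))
       \<and> (1 / (1 - \<bar>w\<bar>) \<le> \<xi> \<longrightarrow> Phi \<xi> w = 0)"
proof -
  note w = assms(2,3)
  define T where "T = 1 / (1 - \<bar>w\<bar>)"
  define b where "b = 1 / (1 + \<bar>w\<bar>)"
  have aw: "0 \<le> \<bar>w\<bar>" "\<bar>w\<bar> < 1" using w by auto
  have hb: "1/2 \<le> b" using aw by (simp add: b_def field_simps)
  have bT: "b \<le> T" using aw by (simp add: b_def T_def frac_le)
  have hT: "1/2 < T" using hb bT aw
  proof -
    have "1 \<le> T" using aw by (simp add: T_def field_simps)
    then show ?thesis by simp
  qed
  have f3T: "f3 w T = 0" by (simp add: f3_def T_def)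
  have f12: "f1 (1/2) = f2 w (1/2)" by (simp add: f1_def f2_def)
  have mb: "f2 w b = f3 w b" using match[OF w] by (simp add: b_def)
  have P3: "(Kf w has_integral (f3 w b - f3 w T)) {b..T}"
    using piece3[OF w, of b T] bT by (simp add: b_def T_def)
  have c1: "Phi \<xi> w = f1 \<xi>" if x: "\<xi> \<le> 1/2"
  proof -
    have P1: "(Kf w has_integral (f1 \<xi> - f1 (1/2))) {\<xi>..1/2}" using piece1[OF w assms(1) x] by simp
    have P2: "(Kf w has_integral (f2 w (1/2) - f2 w b)) {1/2..b}"
      using piece2[OF w, of "1/2" b] hb by (simp add: b_def)
    have "(Kf w has_integral ((f1 \<xi> - f1 (1/2)) + (f2 w (1/2) - f2 w b))) {\<xi>..b}"
      by (rule has_integral_combine[OF _ _ P1 P2]) (use x hb in auto)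
    then have "(Kf w has_integral (((f1 \<xi> - f1 (1/2)) + (f2 w (1/2) - f2 w b)) + (f3 w b - f3 w T))) {\<xi>..T}"
      using has_integral_combine[OF _ _ _ P3, of \<xi>] x hb bT by auto
    then have "(Kf w has_integral f1 \<xi>) {\<xi>..T}" using f3T f12 mb by simp
    then show ?thesis using Phi_value[OF w assms(1)] x hT unfolding T_def by auto
  qed
  have c2: "Phi \<xi> w = f2 w \<xi>" if x: "1/2 \<le> \<xi>" "\<xi> \<le> b"
  proof (cases "\<xi> < T")
    case True
    have P2: "(Kf w has_integral (f2 w \<xi> - f2 w b)) {\<xi>..b}"
      using piece2[OF w, of \<xi> b] x by (simp add: b_def)
    have "(Kf w has_integral ((f2 w \<xi> - f2 w b) + (f3 w b - f3 w T))) {\<xi>..T}"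
      by (rule has_integral_combine[OF _ _ P2 P3]) (use x bT in auto)
    then have "(Kf w has_integral f2 w \<xi>) {\<xi>..T}" using f3T mb by simp
    then show ?thesis using Phi_value[OF w assms(1)] True unfolding T_def by auto
  next
    case False
    then have "\<xi> = b" "\<xi> = T" using x bT by auto
    then show ?thesis using Phi_large[OF w] mb f3T unfolding T_def by auto
  qed
  have c3: "Phi \<xi> w = f3 w \<xi>" if x: "b \<le> \<xi>" "\<xi> \<le> T"
  proof (cases "\<xi> < T")
    case True
    have "(Kf w has_integral (f3 w \<xi> - f3 w T)) {\<xi>..T}"
      using piece3[OF w, of \<xi> T] x by (simp add: b_def T_def)
    then have "(Kf w has_integral f3 w \<xi>) {\<xi>..T}" using f3T by simp
    then show ?thesis using Phi_value[OF w assms(1)] True unfolding T_def by auto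
  next
    case False
    then have "\<xi> = T" using x by auto
    then show ?thesis using Phi_large[OF w] f3T unfolding T_def by auto
  qed
  show ?thesis
    using c1 c2 c3 Phi_large[OF w]
    by (auto simp: f1_def f2_def f3_def b_def T_def)
qed

end
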